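(* For every $n\ge0$, $Inn_l(Q_n)=Inn_r(Q_n)$, and $Inn(Q_n)=\langle T_x,\ L_{x,y}\mid x,y\in Q_n\rangle$.
   Context: Cayley--Dickson loops: $Q_0=\{1,-1\}\subset\mathbb{R}$ with conjugation $x^*=x$. For $n\ge1$, $Q_n=\{(x,0),(x,1)\mid x\in Q_{n-1}\}$ with multiplication $(x,0)(y,0)=(xy,0)$, $(x,0)(y,1)=(yx,1)$, $(x,1)(y,0)=(xy^*,1)$, $(x,1)(y,1)=(-y^*x,0)$ and conjugation $(x,0)^*=(x^*,0)$, $(x,1)^*=(-x,1)$, where $-(x,a)=(-x,a)$. $Q_n$ is a loop with neutral element $1=(1,0,\dots,0)$. For a loop $Q$: $L_x(a)=xa$, $R_x(a)=ax$, $T_x=L_x^{-1}R_x$, $L_{x,y}=L_{yx}^{-1}L_yL_x$, $R_{x,y}=R_{xy}^{-1}R_yR_x$; $Mlt(Q)=\langle L_x,R_x\rangle$, $Mlt_l(Q)=\langle L_x\rangle$, $Mlt_r(Q)=\langle R_x\rangle$, and $Inn(Q)$, $Inn_l(Q)$, $Inn_r(Q)$ are the stabilizers of $1$ in these groups respectively. *)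

theory Defs
  imports "HOL-Algebra.Bij" "HOL-Algebra.Generated_Groups"
begin

text \<open>Elements of Q_n are encoded as pairs (s, bs): s is the sign (True means -1),
  bs is a list of n bits; the head of bs is the outermost Cayley--Dickson bit,
  i.e. (x, a) in Q_n is encoded as (sign of x, a # bits of x).\<close>

type_synonym cd = "bool \<times> bool list"

definition cd_carrier :: "nat \<Rightarrow> cd set" where
  "cd_carrier n = {(s, bs). length bs = n}"

definition cd_one :: "nat \<Rightarrow> cd" where
  "cd_one n = (False, replicate n False)"

definition cd_neg :: "cd \<Rightarrow> cd" where
  "cd_neg x = (\<not> fst x, snd x)"

definition cd_cons :: "bool \<Rightarrow> cd \<Rightarrow> cd" where
  "cd_cons a x = (fst x, a # snd x)"

fun conj_sign :: "bool \<Rightarrow> bool list \<Rightarrow> bool" where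
  "conj_sign s [] = s"
| "conj_sign s (False # bs) = conj_sign s bs"
| "conj_sign s (True # bs) = (\<not> s)"

definition cd_conj :: "cd \<Rightarrow> cd" where
  "cd_conj x = (conj_sign (fst x) (snd x), snd x)"

function (sequential) cd_mult :: "cd \<Rightarrow> cd \<Rightarrow> cd" where
  "cd_mult (s, []) (t, []) = (s \<noteq> t, [])"
| "cd_mult (s, False # xs) (t, False # ys) = cd_cons False (cd_mult (s, xs) (t, ys))"
| "cd_mult (s, False # xs) (t, True # ys) = cd_cons True (cd_mult (t, ys) (s, xs))"
| "cd_mult (s, True # xs) (t, False # ys) =
     cd_cons True (cd_mult (s, xs) (conj_sign t ys, ys))"
| "cd_mult (s, True # xs) (t, True # ys) =
     cd_cons False (cd_neg (cd_mult (conj_sign t ys, ys) (s, xs)))"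
| "cd_mult x y = x"  (* mismatched lengths: irrelevant *)
  by pat_completeness auto
termination
  by (relation "measure (\<lambda>(x, y). length (snd x) + length (snd y))") auto

definition Lt :: "nat \<Rightarrow> cd \<Rightarrow> cd \<Rightarrow> cd" where
  "Lt n x = restrict (\<lambda>a. cd_mult x a) (cd_carrier n)"

definition Rt :: "nat \<Rightarrow> cd \<Rightarrow> cd \<Rightarrow> cd" where
  "Rt n x = restrict (\<lambda>a. cd_mult a x) (cd_carrier n)"

abbreviation SymQ :: "nat \<Rightarrow> (cd \<Rightarrow> cd) monoid" where
  "SymQ n \<equiv> BijGroup (cd_carrier n)"

definition Mlt :: "nat \<Rightarrow> (cd \<Rightarrow> cd) set" where
  "Mlt n = generate (SymQ n) ((Lt n ` cd_carrier n) \<union> (Rt n ` cd_carrier n))"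

definition Mlt_l :: "nat \<Rightarrow> (cd \<Rightarrow> cd) set" where
  "Mlt_l n = generate (SymQ n) (Lt n ` cd_carrier n)"

definition Mlt_r :: "nat \<Rightarrow> (cd \<Rightarrow> cd) set" where
  "Mlt_r n = generate (SymQ n) (Rt n ` cd_carrier n)"

definition stab1 :: "nat \<Rightarrow> (cd \<Rightarrow> cd) set \<Rightarrow> (cd \<Rightarrow> cd) set" where
  "stab1 n G = {f \<in> G. f (cd_one n) = cd_one n}"

definition Inn :: "nat \<Rightarrow> (cd \<Rightarrow> cd) set" where "Inn n = stab1 n (Mlt n)"
definition Inn_l :: "nat \<Rightarrow> (cd \<Rightarrow> cd) set" where "Inn_l n = stab1 n (Mlt_l n)"
definition Inn_r :: "nat \<Rightarrow> (cd \<Rightarrow> cd) set" where "Inn_r n = stab1 n (Mlt_r n)"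

definition Tmap :: "nat \<Rightarrow> cd \<Rightarrow> cd \<Rightarrow> cd" where
  "Tmap n x = inv\<^bsub>SymQ n\<^esub> (Lt n x) \<otimes>\<^bsub>SymQ n\<^esub> Rt n x"

definition Lmap :: "nat \<Rightarrow> cd \<Rightarrow> cd \<Rightarrow> cd \<Rightarrow> cd" where
  "Lmap n x y = inv\<^bsub>SymQ n\<^esub> (Lt n (cd_mult y x)) \<otimes>\<^bsub>SymQ n\<^esub> Lt n y \<otimes>\<^bsub>SymQ n\<^esub> Lt n x"

end

theory Submission
  imports Defs
begin

definition xorl :: "bool list \<Rightarrow> bool list \<Rightarrow> bool list" where
  "xorl u v = map2 (\<noteq>) u v"

function (sequential) sg :: "bool list \<Rightarrow> bool list \<Rightarrow> bool" where
  "sg (False # u) (False # v) = sg u v"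
| "sg (False # u) (True # v) = sg v u"
| "sg (True # u) (False # v) = (sg u v \<noteq> (True \<in> set v))"
| "sg (True # u) (True # v) = ((True \<noteq> (True \<in> set v)) \<noteq> sg v u)"
| "sg _ _ = False"
  by pat_completeness auto
termination by (relation "measure (\<lambda>(u, v). length u + length v)") auto

lemma conj_sign_eq: "conj_sign s bs = (s \<noteq> (True \<in> set bs))"
  by (induction s bs rule: conj_sign.induct) auto

lemma length_xorl[simp]: "length (xorl u v) = min (length u) (length v)"
  by (simp add: xorl_def)

lemma xorl_Cons[simp]: "xorl (a # u) (b # v) = (a \<noteq> b) # xorl u v"
  by (simp add: xorl_def)
lemma xorl_Nil[simp]: "xorl [] v = []" "xorl u [] = []"
  by (simp_all add: xorl_def)

lemma xorl_comm: "xorl u v = xorl v u"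
proof (induction u arbitrary: v)
  case Nil then show ?case by simp
next
  case (Cons a u) then show ?case by (cases v) auto
qed

lemma xorl_assoc: "xorl (xorl u v) w = xorl u (xorl v w)"
  unfolding xorl_def
proof (induction u arbitrary: v w)
  case Nil then show ?case by simp
next
  case (Cons a u) then show ?case by (cases v; cases w) auto
qed

lemma xorl_self: "length u = length v \<Longrightarrow> xorl (xorl u v) v = u"
  by (induction u v rule: list_induct2) auto

lemma xorl_zero: "length u = length v \<Longrightarrow> xorl u (replicate (length v) False) = u"
  by (induction u v rule: list_induct2) auto

lemma xorl_zero': "length u = length v \<Longrightarrow> xorl (replicate (length v) False) u = u"
  by (induction u v rule: list_induct2) auto

lemma xorl_zero_r: "xorl u (replicate (length u) False) = u"
  by (induction u) auto
lemma xorl_zero_l: "xorl (replicate (length u) False) u = u"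
  by (induction u) auto

lemma mult_eq_aux: "\<forall>s t u v. length u = k \<longrightarrow> length v = k \<longrightarrow>
   cd_mult (s,u) (t,v) = ((s\<noteq>t) \<noteq> sg u v, xorl u v)"
proof (induction k)
  case 0 then show ?case by auto
next
  case (Suc k)
  show ?case
  proof (intro allI impI)
    fix s t u v assume "length (u::bool list) = Suc k" "length (v::bool list) = Suc k"
    then obtain a u' b v' where u: "u = a # u'" and v: "v = b # v'" and l: "length u' = k" "length v' = k"
      by (metis length_Suc_conv)
    show "cd_mult (s,u) (t,v) = ((s\<noteq>t) \<noteq> sg u v, xorl u v)"
      using Suc.IH l unfolding u v
      by (cases a; cases b) (auto simp: cd_cons_def cd_neg_def conj_sign_eq xorl_comm)
  qed
qed

lemma mult_eq: "length u = length v \<Longrightarrow> cd_mult (s,u) (t,v) = ((s\<noteq>t) \<noteq> sg u v, xorl u v)"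
  using mult_eq_aux by blast

lemma sg_conj_aux: "\<forall>u v. length u = k \<longrightarrow> length v = k \<longrightarrow>
   ((sg u v \<noteq> (True \<in> set (xorl u v))) = ((sg v u \<noteq> (True \<in> set v)) \<noteq> (True \<in> set u)))"
proof (induction k)
  case 0 then show ?case by auto
next
  case (Suc k)
  show ?case
  proof (intro allI impI)
    fix u v assume "length (u::bool list) = Suc k" "length (v::bool list) = Suc k"
    then obtain a u' b v' where u: "u = a # u'" and v: "v = b # v'" and l: "length u' = k" "length v' = k"
      by (metis length_Suc_conv)
    have I1: "(sg u' v' \<noteq> (True \<in> set (xorl u' v'))) = ((sg v' u' \<noteq> (True \<in> set v')) \<noteq> (True \<in> set u'))"
      using Suc.IH l by blast
    have I2: "(sg v' u' \<noteq> (True \<in> set (xorl v' u'))) = ((sg u' v' \<noteq> (True \<in> set u')) \<noteq> (True \<in> set v'))"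
      using Suc.IH l by blast
    show "((sg u v \<noteq> (True \<in> set (xorl u v))) = ((sg v u \<noteq> (True \<in> set v)) \<noteq> (True \<in> set u)))"
      unfolding u v using I1 I2 apply (induct a; induct b)
      apply (simp_all (no_asm_use) add: xorl_comm)
       apply argo
      apply argo
      done
  qed
qed



lemma sg_conj: "length u = length v \<Longrightarrow>
   ((sg u v \<noteq> (True \<in> set (xorl u v))) = ((sg v u \<noteq> (True \<in> set v)) \<noteq> (True \<in> set u)))"
  using sg_conj_aux by blast

lemma mem_C: "x \<in> cd_carrier n \<longleftrightarrow> length (snd x) = n"
  by (cases x) (simp add: cd_carrier_def)

lemma mem_C2[simp]: "(s, u) \<in> cd_carrier n \<longleftrightarrow> length u = n"
  by (simp add: cd_carrier_def)

lemma conj_eq: "cd_conj (s, u) = (s \<noteq> (True \<in> set u), u)"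
  by (simp add: cd_conj_def conj_sign_eq)

lemma conj_conj: "cd_conj (cd_conj x) = x"
  by (cases x) (auto simp: conj_eq)

lemma conj_C: "x \<in> cd_carrier n \<Longrightarrow> cd_conj x \<in> cd_carrier n"
  by (cases x) (auto simp: conj_eq)

lemma mult_C: "x \<in> cd_carrier n \<Longrightarrow> y \<in> cd_carrier n \<Longrightarrow> cd_mult x y \<in> cd_carrier n"
  by (cases x; cases y) (simp add: mult_eq)

lemma conj_mult: "x \<in> cd_carrier n \<Longrightarrow> y \<in> cd_carrier n \<Longrightarrow>
   cd_conj (cd_mult x y) = cd_mult (cd_conj y) (cd_conj x)"
proof -
  assume "x \<in> cd_carrier n" "y \<in> cd_carrier n"
  then obtain s u t v where x: "x = (s,u)" and y: "y = (t,v)" and l: "length u = n" "length v = n"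
    by (cases x; cases y) auto
  have e: "(sg u v \<noteq> (True \<in> set (xorl u v))) = ((sg v u \<noteq> (True \<in> set v)) \<noteq> (True \<in> set u))"
    using sg_conj l by simp
  have c: "xorl v u = xorl u v" by (rule xorl_comm)
  show ?thesis unfolding x y using l e
    apply (simp add: mult_eq conj_eq c)
    apply argo
    done
qed

lemma sg_zero_aux: "\<forall>v. sg (replicate k False) v = False \<and> sg v (replicate k False) = False"
proof (induction k)
  case 0 then show ?case by (auto elim: sg.elims)
next
  case (Suc k)
  show ?case
  proof
    fix v show "sg (replicate (Suc k) False) v = False \<and> sg v (replicate (Suc k) False) = False"
    proof (cases v)
      case Nil then show ?thesis by simp
    next
      case (Cons b w) then show ?thesis using Suc.IH by (cases b) auto
    qed
  qed
qed

lemma sg_zero1: "sg (replicate k False) v = False" using sg_zero_aux by blast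
lemma sg_zero2: "sg v (replicate k False) = False" using sg_zero_aux by blast

lemma one_C: "cd_one n \<in> cd_carrier n"
  by (simp add: cd_one_def)

lemma mult_one_left: "y \<in> cd_carrier n \<Longrightarrow> cd_mult (cd_one n) y = y"
  by (cases y) (auto simp: cd_one_def mult_eq sg_zero1 xorl_zero_l)

lemma mult_one_right: "y \<in> cd_carrier n \<Longrightarrow> cd_mult y (cd_one n) = y"
  by (cases y) (auto simp: cd_one_def mult_eq sg_zero2 xorl_zero_r)



abbreviation "C n \<equiv> cd_carrier n"

lemma carrier_G[simp]: "carrier (SymQ n) = Bij (C n)"
  by (simp add: BijGroup_def)

lemma inv_Bij: "f \<in> Bij (C n) \<Longrightarrow> inv\<^bsub>SymQ n\<^esub> f \<in> Bij (C n)"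
proof -
  interpret G: group "SymQ n" by (rule group_BijGroup)
  show "f \<in> Bij (C n) \<Longrightarrow> inv\<^bsub>SymQ n\<^esub> f \<in> Bij (C n)" using G.inv_closed by simp
qed

lemma mult_Bij: "f \<in> Bij (C n) \<Longrightarrow> g \<in> Bij (C n) \<Longrightarrow> f \<otimes>\<^bsub>SymQ n\<^esub> g \<in> Bij (C n)"
proof -
  interpret G: group "SymQ n" by (rule group_BijGroup)
  show "f \<in> Bij (C n) \<Longrightarrow> g \<in> Bij (C n) \<Longrightarrow> f \<otimes>\<^bsub>SymQ n\<^esub> g \<in> Bij (C n)" using G.m_closed by simp
qed

lemma bool_cancel[simp]: "((s = (\<not> a)) = (\<not> a)) = s" by auto

lemma mult_apply: "f \<in> Bij (C n) \<Longrightarrow> g \<in> Bij (C n) \<Longrightarrow> x \<in> C n \<Longrightarrow>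
   (f \<otimes>\<^bsub>SymQ n\<^esub> g) x = f (g x)"
  by (simp add: BijGroup_def compose_def)

lemma one_apply: "x \<in> C n \<Longrightarrow> \<one>\<^bsub>SymQ n\<^esub> x = x"
  by (simp add: BijGroup_def)

lemma Bij_C: "f \<in> Bij (C n) \<Longrightarrow> x \<in> C n \<Longrightarrow> f x \<in> C n"
  using Bij_imp_funcset by blast

lemma inv_apply1: "f \<in> Bij (C n) \<Longrightarrow> x \<in> C n \<Longrightarrow> (inv\<^bsub>SymQ n\<^esub> f) (f x) = x"
  by (simp add: inv_BijGroup Bij_C) (metis Bij_def Int_iff bij_betw_def inv_into_f_f mem_Collect_eq)

lemma inv_apply2: "f \<in> Bij (C n) \<Longrightarrow> x \<in> C n \<Longrightarrow> f ((inv\<^bsub>SymQ n\<^esub> f) x) = x"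
  by (simp add: inv_BijGroup) (metis Bij_def Int_iff bij_betw_def f_inv_into_f mem_Collect_eq)

lemma Bij_eqI: "f \<in> Bij (C n) \<Longrightarrow> g \<in> Bij (C n) \<Longrightarrow> (\<And>x. x \<in> C n \<Longrightarrow> f x = g x) \<Longrightarrow> f = g"
  by (meson Bij_imp_extensional extensionalityI)

definition isForm :: "nat \<Rightarrow> (cd \<Rightarrow> cd) \<Rightarrow> (bool list \<Rightarrow> bool) \<Rightarrow> bool list \<Rightarrow> bool" where
  "isForm n f \<sigma> c \<longleftrightarrow> (\<forall>s u. length u = n \<longrightarrow> f (s,u) = (s \<noteq> \<sigma> u, xorl u c))"

definition isG :: "nat \<Rightarrow> (cd \<Rightarrow> cd) \<Rightarrow> bool" where
  "isG n f \<longleftrightarrow> f \<in> Bij (C n) \<and> (\<exists>\<sigma> c. length c = n \<and> isForm n f \<sigma> c)"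

lemma form_Bij:
  assumes e: "f \<in> extensional (C n)" and l: "length c = n" and F: "isForm n f \<sigma> c"
  shows "f \<in> Bij (C n)"
proof -
  have fx: "f (s,u) = (s \<noteq> \<sigma> u, xorl u c)" if "length u = n" for s u
    using F that by (simp add: isForm_def)
  have inj: "inj_on f (C n)"
  proof (rule inj_onI)
    fix x y assume x: "x \<in> C n" and y: "y \<in> C n" and eq: "f x = f y"
    obtain s u t v where xy: "x = (s,u)" "y = (t,v)" by (cases x; cases y) auto
    have lu: "length u = n" "length v = n" using x y xy by auto
    have "xorl u c = xorl v c" using eq fx lu xy by simp
    then have "xorl (xorl u c) c = xorl (xorl v c) c" by simp
    then have uv: "u = v" using xorl_self l lu by metis
    then show "x = y" using eq fx lu xy by auto
  qed
  have img: "f ` C n = C n"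
  proof
    show "f ` C n \<subseteq> C n" using fx by (auto simp: mem_C l)
    show "C n \<subseteq> f ` C n"
    proof
      fix y assume y: "y \<in> C n"
      obtain t w where yy: "y = (t,w)" by (cases y)
      have lw: "length w = n" using y yy by simp
      let ?x = "(t \<noteq> \<sigma> (xorl w c), xorl w c)"
      have "?x \<in> C n" using lw l by simp
      moreover have "f ?x = y" using fx[of "xorl w c"] lw l xorl_self yy by simp
      ultimately show "y \<in> f ` C n" by (metis image_eqI)
    qed
  qed
  show ?thesis using e inj img by (simp add: Bij_def bij_betw_def)
qed

lemma Lt_apply: "a \<in> C n \<Longrightarrow> Lt n x a = cd_mult x a"
  by (simp add: Lt_def)
lemma Rt_apply: "a \<in> C n \<Longrightarrow> Rt n x a = cd_mult a x"
  by (simp add: Rt_def)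

lemma Lt_isG: assumes "x \<in> C n" shows "isG n (Lt n x)"
proof -
  obtain s0 u0 where x: "x = (s0,u0)" and l: "length u0 = n" using assms by (cases x) auto
  have F: "isForm n (Lt n x) (\<lambda>v. s0 \<noteq> sg u0 v) u0"
    unfolding isForm_def using l by (auto simp: Lt_apply x mult_eq xorl_comm)
  have "Lt n x \<in> Bij (C n)" by (rule form_Bij[OF _ l F]) (simp add: Lt_def)
  then show ?thesis using F l isG_def by blast
qed

lemma Rt_isG: assumes "x \<in> C n" shows "isG n (Rt n x)"
proof -
  obtain s0 u0 where x: "x = (s0,u0)" and l: "length u0 = n" using assms by (cases x) auto
  have F: "isForm n (Rt n x) (\<lambda>v. s0 \<noteq> sg v u0) u0"
    unfolding isForm_def using l by (auto simp: Rt_apply x mult_eq)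
  have "Rt n x \<in> Bij (C n)" by (rule form_Bij[OF _ l F]) (simp add: Rt_def)
  then show ?thesis using F l isG_def by blast
qed

lemma Lt_Bij: "x \<in> C n \<Longrightarrow> Lt n x \<in> Bij (C n)" using Lt_isG isG_def by blast
lemma Rt_Bij: "x \<in> C n \<Longrightarrow> Rt n x \<in> Bij (C n)" using Rt_isG isG_def by blast

lemma isG_mult: assumes f: "isG n f" and g: "isG n g" shows "isG n (f \<otimes>\<^bsub>SymQ n\<^esub> g)"
proof -
  obtain \<sigma>1 c1 where f1: "f \<in> Bij (C n)" "length c1 = n" "isForm n f \<sigma>1 c1" using f unfolding isG_def by blast
  obtain \<sigma>2 c2 where g1: "g \<in> Bij (C n)" "length c2 = n" "isForm n g \<sigma>2 c2" using g unfolding isG_def by blast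
  have B: "f \<otimes>\<^bsub>SymQ n\<^esub> g \<in> Bij (C n)"
    using f1 g1 mult_Bij by blast
  have lc: "length (xorl c2 c1) = n" using f1 g1 by simp
  have Fm: "isForm n (f \<otimes>\<^bsub>SymQ n\<^esub> g) (\<lambda>u. \<sigma>2 u \<noteq> \<sigma>1 (xorl u c2)) (xorl c2 c1)"
    unfolding isForm_def
  proof (intro allI impI)
    fix s u assume lu: "length (u::bool list) = n"
    have fx: "\<And>s u. length u = n \<Longrightarrow> f (s,u) = (s \<noteq> \<sigma>1 u, xorl u c1)"
      using f1(3) unfolding isForm_def by blast
    have gx: "\<And>s u. length u = n \<Longrightarrow> g (s,u) = (s \<noteq> \<sigma>2 u, xorl u c2)"
      using g1(3) unfolding isForm_def by blast
    have l2: "length (xorl u c2) = n" using lu g1 by simp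
    have "(f \<otimes>\<^bsub>SymQ n\<^esub> g) (s,u) = f (g (s,u))" using f1(1) g1(1) lu mult_apply[of f n g "(s,u)"] by simp
    also have "\<dots> = f (s \<noteq> \<sigma>2 u, xorl u c2)" by (simp only: gx[OF lu])
    also have "\<dots> = ((s \<noteq> \<sigma>2 u) \<noteq> \<sigma>1 (xorl u c2), xorl (xorl u c2) c1)" by (rule fx[OF l2])
    also have "\<dots> = (s \<noteq> (\<sigma>2 u \<noteq> \<sigma>1 (xorl u c2)), xorl u (xorl c2 c1))"
      unfolding xorl_assoc by (rule arg_cong2[where f=Pair]) blast+
    finally show "(f \<otimes>\<^bsub>SymQ n\<^esub> g) (s,u) = (s \<noteq> (\<sigma>2 u \<noteq> \<sigma>1 (xorl u c2)), xorl u (xorl c2 c1))" .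
  qed
  show ?thesis unfolding isG_def using B lc Fm by blast
qed

lemma isG_inv: assumes f: "isG n f" shows "isG n (inv\<^bsub>SymQ n\<^esub> f)"
proof -
  obtain \<sigma> c where f1: "f \<in> Bij (C n)" "length c = n" "isForm n f \<sigma> c" using f unfolding isG_def by blast
  have B: "inv\<^bsub>SymQ n\<^esub> f \<in> Bij (C n)"
    using f1 inv_Bij by blast
  have "isForm n (inv\<^bsub>SymQ n\<^esub> f) (\<lambda>u. \<sigma> (xorl u c)) c"
    unfolding isForm_def
  proof (intro allI impI)
    fix s u assume lu: "length (u::bool list) = n"
    have "f (s \<noteq> \<sigma> (xorl u c), xorl u c) = (s, u)"
      using f1 lu xorl_self by (simp add: isForm_def)
    then have "(inv\<^bsub>SymQ n\<^esub> f) (s,u) = (inv\<^bsub>SymQ n\<^esub> f) (f (s \<noteq> \<sigma> (xorl u c), xorl u c))" by simp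
    also have "\<dots> = (s \<noteq> \<sigma> (xorl u c), xorl u c)" using inv_apply1 f1 lu by simp
    finally show "(inv\<^bsub>SymQ n\<^esub> f) (s,u) = (s \<noteq> \<sigma> (xorl u c), xorl u c)" .
  qed
  then show ?thesis using B f1 isG_def by blast
qed

lemma isG_one: "isG n \<one>\<^bsub>SymQ n\<^esub>"
proof -
  have "isForm n \<one>\<^bsub>SymQ n\<^esub> (\<lambda>u. False) (replicate n False)"
    unfolding isForm_def by (auto simp: one_apply xorl_zero)
  moreover have "\<one>\<^bsub>SymQ n\<^esub> \<in> Bij (C n)" by (simp add: BijGroup_def id_Bij)
  ultimately show ?thesis unfolding isG_def by (metis length_replicate)
qed

lemma generate_isG:
  assumes "\<And>g. g \<in> S \<Longrightarrow> isG n g" and "f \<in> generate (SymQ n) S"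
  shows "isG n f"
  using assms(2) by induction (auto intro: assms(1) isG_one isG_mult isG_inv)



definition J :: "nat \<Rightarrow> cd \<Rightarrow> cd" where "J n = restrict cd_conj (C n)"

lemma J_apply: "a \<in> C n \<Longrightarrow> J n a = cd_conj a"
  by (simp add: J_def)

lemma J_isG: "isG n (J n)"
proof -
  have F: "isForm n (J n) (\<lambda>u. True \<in> set u) (replicate n False)"
    unfolding isForm_def by (auto simp: J_apply conj_eq xorl_zero)
  have "J n \<in> Bij (C n)" by (rule form_Bij[OF _ _ F]) (auto simp: J_def)
  then show ?thesis using F isG_def by (metis length_replicate)
qed

lemma J_Bij: "J n \<in> Bij (C n)" using J_isG isG_def by blast

lemma JJ: "J n \<otimes>\<^bsub>SymQ n\<^esub> J n = \<one>\<^bsub>SymQ n\<^esub>"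
proof -
  interpret G: group "SymQ n" by (rule group_BijGroup)
  show ?thesis
    by (rule Bij_eqI) (auto simp: J_Bij mult_apply one_apply J_apply conj_C conj_conj
        intro: G.m_closed[simplified] G.one_closed[simplified])
qed

lemma invJ: "inv\<^bsub>SymQ n\<^esub> (J n) = J n"
proof -
  interpret G: group "SymQ n" by (rule group_BijGroup)
  show ?thesis using G.inv_equality[of "J n" "J n"] JJ J_Bij by simp
qed

lemma J_conj_L: assumes x: "x \<in> C n"
  shows "J n \<otimes>\<^bsub>SymQ n\<^esub> Lt n x \<otimes>\<^bsub>SymQ n\<^esub> J n = Rt n (cd_conj x)"
proof -
  interpret G: group "SymQ n" by (rule group_BijGroup)
  have B: "J n \<otimes>\<^bsub>SymQ n\<^esub> Lt n x \<in> Bij (C n)"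
    using G.m_closed[of "J n" "Lt n x"] J_Bij Lt_Bij[OF x] by simp
  show ?thesis
  proof (rule Bij_eqI)
    show "J n \<otimes>\<^bsub>SymQ n\<^esub> Lt n x \<otimes>\<^bsub>SymQ n\<^esub> J n \<in> Bij (C n)"
      using G.m_closed[of _ "J n"] B J_Bij by simp
    show "Rt n (cd_conj x) \<in> Bij (C n)" using Rt_Bij conj_C x by blast
    fix a assume a: "a \<in> C n"
    have "(J n \<otimes>\<^bsub>SymQ n\<^esub> Lt n x \<otimes>\<^bsub>SymQ n\<^esub> J n) a = J n (Lt n x (J n a))"
      using B J_Bij Lt_Bij[OF x] a by (simp add: mult_apply Bij_C)
    also have "\<dots> = cd_conj (cd_mult x (cd_conj a))"
      using a x by (simp add: J_apply Lt_apply conj_C mult_C)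
    also have "\<dots> = cd_mult a (cd_conj x)" using conj_mult[OF x conj_C[OF a]] conj_conj by simp
    also have "\<dots> = Rt n (cd_conj x) a" using a by (simp add: Rt_apply)
    finally show "(J n \<otimes>\<^bsub>SymQ n\<^esub> Lt n x \<otimes>\<^bsub>SymQ n\<^esub> J n) a = Rt n (cd_conj x) a" .
  qed
qed

lemma J_conj_R: assumes x: "x \<in> C n"
  shows "J n \<otimes>\<^bsub>SymQ n\<^esub> Rt n x \<otimes>\<^bsub>SymQ n\<^esub> J n = Lt n (cd_conj x)"
proof -
  interpret G: group "SymQ n" by (rule group_BijGroup)
  have B: "J n \<otimes>\<^bsub>SymQ n\<^esub> Rt n x \<in> Bij (C n)"
    using G.m_closed[of "J n" "Rt n x"] J_Bij Rt_Bij[OF x] by simp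
  show ?thesis
  proof (rule Bij_eqI)
    show "J n \<otimes>\<^bsub>SymQ n\<^esub> Rt n x \<otimes>\<^bsub>SymQ n\<^esub> J n \<in> Bij (C n)"
      using G.m_closed[of _ "J n"] B J_Bij by simp
    show "Lt n (cd_conj x) \<in> Bij (C n)" using Lt_Bij conj_C x by blast
    fix a assume a: "a \<in> C n"
    have "(J n \<otimes>\<^bsub>SymQ n\<^esub> Rt n x \<otimes>\<^bsub>SymQ n\<^esub> J n) a = J n (Rt n x (J n a))"
      using B J_Bij Rt_Bij[OF x] a by (simp add: mult_apply Bij_C)
    also have "\<dots> = cd_conj (cd_mult (cd_conj a) x)"
      using a x by (simp add: J_apply Rt_apply conj_C mult_C)
    also have "\<dots> = cd_mult (cd_conj x) a" using conj_mult[OF conj_C[OF a] x] conj_conj by simp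
    also have "\<dots> = Lt n (cd_conj x) a" using a by (simp add: Lt_apply)
    finally show "(J n \<otimes>\<^bsub>SymQ n\<^esub> Rt n x \<otimes>\<^bsub>SymQ n\<^esub> J n) a = Lt n (cd_conj x) a" .
  qed
qed

lemma gen_conj:
  assumes S: "S \<subseteq> Bij (C n)" and S': "S' \<subseteq> Bij (C n)"
    and St: "\<And>g. g \<in> S \<Longrightarrow> J n \<otimes>\<^bsub>SymQ n\<^esub> g \<otimes>\<^bsub>SymQ n\<^esub> J n \<in> S'"
    and f: "f \<in> generate (SymQ n) S"
  shows "J n \<otimes>\<^bsub>SymQ n\<^esub> f \<otimes>\<^bsub>SymQ n\<^esub> J n \<in> generate (SymQ n) S'"
proof -
  interpret G: group "SymQ n" by (rule group_BijGroup)
  have SC: "S \<subseteq> carrier (SymQ n)" using S by simp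
  have JC: "J n \<in> carrier (SymQ n)" using J_Bij by simp
  from f show ?thesis
  proof induction
    case one
    have "J n \<otimes>\<^bsub>SymQ n\<^esub> \<one>\<^bsub>SymQ n\<^esub> \<otimes>\<^bsub>SymQ n\<^esub> J n = \<one>\<^bsub>SymQ n\<^esub>"
      using JC JJ by (simp only: G.r_one)
    then show ?case using generate.one[of "SymQ n" S'] by simp
  next
    case (incl h) show ?case by (rule generate.incl[OF St[OF incl]])
  next
    case (inv h)
    have h: "h \<in> carrier (SymQ n)" using inv SC by blast
    have e: "J n \<otimes>\<^bsub>SymQ n\<^esub> inv\<^bsub>SymQ n\<^esub> h \<otimes>\<^bsub>SymQ n\<^esub> J n
        = inv\<^bsub>SymQ n\<^esub> (J n \<otimes>\<^bsub>SymQ n\<^esub> h \<otimes>\<^bsub>SymQ n\<^esub> J n)"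
      using h JC invJ by (simp add: G.inv_mult_group G.m_assoc mult_Bij inv_Bij)
    show ?case unfolding e by (rule generate.inv[OF St[OF inv]])
  next
    case (eng h1 h2)
    have h: "h1 \<in> carrier (SymQ n)" "h2 \<in> carrier (SymQ n)"
      using G.generate_in_carrier[OF SC eng.hyps(1)] G.generate_in_carrier[OF SC eng.hyps(2)] by auto
    have e: "J n \<otimes>\<^bsub>SymQ n\<^esub> (h1 \<otimes>\<^bsub>SymQ n\<^esub> h2) \<otimes>\<^bsub>SymQ n\<^esub> J n
       = (J n \<otimes>\<^bsub>SymQ n\<^esub> h1 \<otimes>\<^bsub>SymQ n\<^esub> J n) \<otimes>\<^bsub>SymQ n\<^esub> (J n \<otimes>\<^bsub>SymQ n\<^esub> h2 \<otimes>\<^bsub>SymQ n\<^esub> J n)"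
    proof -
      have "(J n \<otimes>\<^bsub>SymQ n\<^esub> h1 \<otimes>\<^bsub>SymQ n\<^esub> J n) \<otimes>\<^bsub>SymQ n\<^esub> (J n \<otimes>\<^bsub>SymQ n\<^esub> h2 \<otimes>\<^bsub>SymQ n\<^esub> J n)
          = J n \<otimes>\<^bsub>SymQ n\<^esub> h1 \<otimes>\<^bsub>SymQ n\<^esub> (J n \<otimes>\<^bsub>SymQ n\<^esub> J n) \<otimes>\<^bsub>SymQ n\<^esub> h2 \<otimes>\<^bsub>SymQ n\<^esub> J n"
        using h JC by (simp only: G.m_assoc G.m_closed)
      also have "\<dots> = J n \<otimes>\<^bsub>SymQ n\<^esub> (h1 \<otimes>\<^bsub>SymQ n\<^esub> h2) \<otimes>\<^bsub>SymQ n\<^esub> J n"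
        using h JC by (simp only: JJ G.r_one G.m_assoc G.m_closed)
      finally show ?thesis by (rule sym)
    qed
    show ?case unfolding e by (rule generate.eng[OF eng.IH])
  qed
qed

lemma isG_commute:
  assumes f: "isG n f" and f1: "f (cd_one n) = cd_one n"
  shows "J n \<otimes>\<^bsub>SymQ n\<^esub> f \<otimes>\<^bsub>SymQ n\<^esub> J n = f"
proof -
  interpret G: group "SymQ n" by (rule group_BijGroup)
  obtain \<sigma> c where fB: "f \<in> Bij (C n)" and l: "length c = n" and F: "isForm n f \<sigma> c"
    using f unfolding isG_def by blast
  have fx: "f (s,u) = (s \<noteq> \<sigma> u, xorl u c)" if "length u = n" for s u
    using F that by (simp add: isForm_def)
  have "xorl (replicate n False) c = replicate n False"
    using fx[of "replicate n False" False] f1 by (simp add: cd_one_def)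
  then have c0: "c = replicate n False" using xorl_zero'[of c c] l by simp
  have fx': "f (s,u) = (s \<noteq> \<sigma> u, u)" if "length u = n" for s u
    using fx[OF that] c0 xorl_zero_r[of u] that by simp
  have B: "J n \<otimes>\<^bsub>SymQ n\<^esub> f \<in> Bij (C n)"
    using G.m_closed[of "J n" f] J_Bij fB by simp
  show ?thesis
  proof (rule Bij_eqI)
    show "J n \<otimes>\<^bsub>SymQ n\<^esub> f \<otimes>\<^bsub>SymQ n\<^esub> J n \<in> Bij (C n)"
      using G.m_closed[of _ "J n"] B J_Bij by simp
    show "f \<in> Bij (C n)" by (rule fB)
    fix a assume a: "a \<in> C n"
    obtain s u where au: "a = (s,u)" and lu: "length u = n" using a by (cases a) auto
    have "(J n \<otimes>\<^bsub>SymQ n\<^esub> f \<otimes>\<^bsub>SymQ n\<^esub> J n) a = J n (f (J n a))"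
      using B J_Bij fB a by (simp add: mult_apply Bij_C)
    also have "\<dots> = f a" using lu unfolding au
      by (simp add: J_apply conj_eq fx') argo
    finally show "(J n \<otimes>\<^bsub>SymQ n\<^esub> f \<otimes>\<^bsub>SymQ n\<^esub> J n) a = f a" .
  qed
qed

lemma Mlt_l_isG: "f \<in> Mlt_l n \<Longrightarrow> isG n f"
  unfolding Mlt_l_def by (rule generate_isG) (auto intro: Lt_isG)
lemma Mlt_r_isG: "f \<in> Mlt_r n \<Longrightarrow> isG n f"
  unfolding Mlt_r_def by (rule generate_isG) (auto intro: Rt_isG)

lemma conj_Mlt_l: "f \<in> Mlt_l n \<Longrightarrow> J n \<otimes>\<^bsub>SymQ n\<^esub> f \<otimes>\<^bsub>SymQ n\<^esub> J n \<in> Mlt_r n"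
  unfolding Mlt_l_def Mlt_r_def
  by (rule gen_conj) (auto intro: Lt_Bij Rt_Bij simp: J_conj_L conj_C)

lemma conj_Mlt_r: "f \<in> Mlt_r n \<Longrightarrow> J n \<otimes>\<^bsub>SymQ n\<^esub> f \<otimes>\<^bsub>SymQ n\<^esub> J n \<in> Mlt_l n"
  unfolding Mlt_l_def Mlt_r_def
  by (rule gen_conj) (auto intro: Lt_Bij Rt_Bij simp: J_conj_R conj_C)

lemma Inn_lr: "Inn_l n = Inn_r n"
proof
  show "Inn_l n \<subseteq> Inn_r n"
  proof
    fix f assume "f \<in> Inn_l n"
    then have f: "f \<in> Mlt_l n" "f (cd_one n) = cd_one n" by (auto simp: Inn_l_def stab1_def)
    have "J n \<otimes>\<^bsub>SymQ n\<^esub> f \<otimes>\<^bsub>SymQ n\<^esub> J n = f" using isG_commute Mlt_l_isG f by blast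
    then have "f \<in> Mlt_r n" using conj_Mlt_l[OF f(1)] by simp
    then show "f \<in> Inn_r n" using f by (simp add: Inn_r_def stab1_def)
  qed
  show "Inn_r n \<subseteq> Inn_l n"
  proof
    fix f assume "f \<in> Inn_r n"
    then have f: "f \<in> Mlt_r n" "f (cd_one n) = cd_one n" by (auto simp: Inn_r_def stab1_def)
    have "J n \<otimes>\<^bsub>SymQ n\<^esub> f \<otimes>\<^bsub>SymQ n\<^esub> J n = f" using isG_commute Mlt_r_isG f by blast
    then have "f \<in> Mlt_l n" using conj_Mlt_r[OF f(1)] by simp
    then show "f \<in> Inn_l n" using f by (simp add: Inn_l_def stab1_def)
  qed
qed


context group begin
lemma idA: "\<lbrakk>a\<in>carrier G; b\<in>carrier G; c\<in>carrier G; h\<in>carrier G\<rbrakk> \<Longrightarrow>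
  a \<otimes> (b \<otimes> h) = c \<otimes> ((inv c \<otimes> a \<otimes> b) \<otimes> h)"
  by (simp add: m_assoc[symmetric])
lemma idB: "\<lbrakk>a\<in>carrier G; x\<in>carrier G; b\<in>carrier G; h\<in>carrier G\<rbrakk> \<Longrightarrow>
  inv x \<otimes> (a \<otimes> h) = b \<otimes> (inv (inv a \<otimes> x \<otimes> b) \<otimes> h)"
  by (simp add: m_assoc[symmetric] inv_mult_group)
lemma idC: "\<lbrakk>a\<in>carrier G; l\<in>carrier G; c\<in>carrier G; r\<in>carrier G; ra\<in>carrier G; h\<in>carrier G\<rbrakk> \<Longrightarrow>
  a \<otimes> (l \<otimes> h) = c \<otimes> ((inv c \<otimes> r) \<otimes> (inv r \<otimes> a \<otimes> ra) \<otimes> inv (inv l \<otimes> ra) \<otimes> h)"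
  by (simp add: m_assoc[symmetric] inv_mult_group) (simp add: m_assoc)
lemma idD: "\<lbrakk>a\<in>carrier G; l\<in>carrier G; lb\<in>carrier G; rb\<in>carrier G; ra\<in>carrier G; h\<in>carrier G\<rbrakk> \<Longrightarrow>
  inv a \<otimes> (l \<otimes> h) = lb \<otimes> ((inv lb \<otimes> rb) \<otimes> inv (inv ra \<otimes> a \<otimes> rb) \<otimes> inv (inv l \<otimes> ra) \<otimes> h)"
  by (simp add: m_assoc[symmetric] inv_mult_group) (simp add: m_assoc)
end

lemma mult_apply3: "a \<in> Bij (C n) \<Longrightarrow> b \<in> Bij (C n) \<Longrightarrow> c \<in> Bij (C n) \<Longrightarrow> z \<in> C n \<Longrightarrow>
   (a \<otimes>\<^bsub>SymQ n\<^esub> b \<otimes>\<^bsub>SymQ n\<^esub> c) z = a (b (c z))"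
proof -
  interpret G: group "SymQ n" by (rule group_BijGroup)
  assume a: "a \<in> Bij (C n)" and b: "b \<in> Bij (C n)" and c: "c \<in> Bij (C n)" and z: "z \<in> C n"
  have ab: "a \<otimes>\<^bsub>SymQ n\<^esub> b \<in> Bij (C n)" using G.m_closed a b by simp
  show ?thesis using a b c z ab by (simp add: mult_apply Bij_C)
qed

lemma Lt_one: "Lt n (cd_one n) = \<one>\<^bsub>SymQ n\<^esub>"
  by (rule Bij_eqI) (auto simp: Lt_Bij one_C id_Bij BijGroup_def Lt_apply mult_one_left)

lemma Lt_at_one: "x \<in> C n \<Longrightarrow> Lt n x (cd_one n) = x"
  by (simp add: Lt_apply one_C mult_one_right)
lemma Rt_at_one: "x \<in> C n \<Longrightarrow> Rt n x (cd_one n) = x"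
  by (simp add: Rt_apply one_C mult_one_left)

definition Rmap :: "nat \<Rightarrow> cd \<Rightarrow> cd \<Rightarrow> cd \<Rightarrow> cd" where
  "Rmap n x y = inv\<^bsub>SymQ n\<^esub> (Rt n (cd_mult x y)) \<otimes>\<^bsub>SymQ n\<^esub> Rt n y \<otimes>\<^bsub>SymQ n\<^esub> Rt n x"

definition LL :: "nat \<Rightarrow> (cd \<Rightarrow> cd) set" where
  "LL n = {Lmap n x y | x y. x \<in> cd_carrier n \<and> y \<in> cd_carrier n}"

definition MK :: "nat \<Rightarrow> (cd \<Rightarrow> cd) set \<Rightarrow> (cd \<Rightarrow> cd) set" where
  "MK n K = {Lt n a \<otimes>\<^bsub>SymQ n\<^esub> h | a h. a \<in> C n \<and> h \<in> K}"

lemma Lmap_Bij: "x \<in> C n \<Longrightarrow> y \<in> C n \<Longrightarrow> Lmap n x y \<in> Bij (C n)"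
  unfolding Lmap_def by (intro mult_Bij inv_Bij Lt_Bij mult_C)
lemma Rmap_Bij: "x \<in> C n \<Longrightarrow> y \<in> C n \<Longrightarrow> Rmap n x y \<in> Bij (C n)"
  unfolding Rmap_def by (intro mult_Bij inv_Bij Rt_Bij mult_C)
lemma Tmap_Bij: "x \<in> C n \<Longrightarrow> Tmap n x \<in> Bij (C n)"
  unfolding Tmap_def by (intro mult_Bij inv_Bij Rt_Bij Lt_Bij)

lemma Lmap_fix: assumes "x \<in> C n" "y \<in> C n" shows "Lmap n x y (cd_one n) = cd_one n"
proof -
  have "Lmap n x y (cd_one n) = (inv\<^bsub>SymQ n\<^esub> (Lt n (cd_mult y x))) (Lt n y (Lt n x (cd_one n)))"
    unfolding Lmap_def using assms by (simp add: mult_apply3 inv_Bij Lt_Bij mult_C one_C)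
  also have "\<dots> = (inv\<^bsub>SymQ n\<^esub> (Lt n (cd_mult y x))) (Lt n (cd_mult y x) (cd_one n))"
    using assms by (simp add: Lt_at_one Lt_apply mult_C)
  also have "\<dots> = cd_one n" using assms by (simp add: inv_apply1 Lt_Bij mult_C one_C)
  finally show ?thesis .
qed

lemma Rmap_fix: assumes "x \<in> C n" "y \<in> C n" shows "Rmap n x y (cd_one n) = cd_one n"
proof -
  have "Rmap n x y (cd_one n) = (inv\<^bsub>SymQ n\<^esub> (Rt n (cd_mult x y))) (Rt n y (Rt n x (cd_one n)))"
    unfolding Rmap_def using assms by (simp add: mult_apply3 inv_Bij Rt_Bij mult_C one_C)
  also have "\<dots> = (inv\<^bsub>SymQ n\<^esub> (Rt n (cd_mult x y))) (Rt n (cd_mult x y) (cd_one n))"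
    using assms by (simp add: Rt_at_one Rt_apply mult_C)
  also have "\<dots> = cd_one n" using assms by (simp add: inv_apply1 Rt_Bij mult_C one_C)
  finally show ?thesis .
qed

lemma Tmap_fix: assumes "x \<in> C n" shows "Tmap n x (cd_one n) = cd_one n"
proof -
  have "Tmap n x (cd_one n) = (inv\<^bsub>SymQ n\<^esub> (Lt n x)) (Rt n x (cd_one n))"
    unfolding Tmap_def using assms by (simp add: mult_apply inv_Bij Rt_Bij Lt_Bij one_C)
  also have "\<dots> = (inv\<^bsub>SymQ n\<^esub> (Lt n x)) (Lt n x (cd_one n))"
    using assms by (simp add: Rt_at_one Lt_at_one)
  also have "\<dots> = cd_one n" using assms by (simp add: inv_apply1 Lt_Bij one_C)
  finally show ?thesis .
qed

lemma left_div: assumes "x \<in> C n" "a \<in> C n" shows "\<exists>b\<in>C n. cd_mult x b = a"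
proof -
  let ?b = "(inv\<^bsub>SymQ n\<^esub> (Lt n x)) a"
  have b: "?b \<in> C n" using assms Bij_C inv_Bij Lt_Bij by blast
  have "Lt n x ?b = a" using assms inv_apply2 Lt_Bij by blast
  then show ?thesis using b Lt_apply by metis
qed

lemma right_div: assumes "x \<in> C n" "a \<in> C n" shows "\<exists>b\<in>C n. cd_mult b x = a"
proof -
  let ?b = "(inv\<^bsub>SymQ n\<^esub> (Rt n x)) a"
  have b: "?b \<in> C n" using assms Bij_C inv_Bij Rt_Bij by blast
  have "Rt n x ?b = a" using assms inv_apply2 Rt_Bij by blast
  then show ?thesis using b Rt_apply by metis
qed


lemma MK_Bij: "K \<subseteq> Bij (C n) \<Longrightarrow> MK n K \<subseteq> Bij (C n)"
  unfolding MK_def using mult_Bij Lt_Bij by blast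

lemma MK_I: "a \<in> C n \<Longrightarrow> h \<in> K \<Longrightarrow> Lt n a \<otimes>\<^bsub>SymQ n\<^esub> h \<in> MK n K"
  unfolding MK_def by blast

lemma MK_closure_L:
  assumes K: "subgroup K (SymQ n)" and LLK: "LL n \<subseteq> K" and x: "x \<in> C n" and m: "m \<in> MK n K"
  shows "Lt n x \<otimes>\<^bsub>SymQ n\<^esub> m \<in> MK n K \<and> inv\<^bsub>SymQ n\<^esub> (Lt n x) \<otimes>\<^bsub>SymQ n\<^esub> m \<in> MK n K"
proof -
  interpret G: group "SymQ n" by (rule group_BijGroup)
  obtain a h where mh: "m = Lt n a \<otimes>\<^bsub>SymQ n\<^esub> h" and a: "a \<in> C n" and h: "h \<in> K"
    using m by (auto simp: MK_def)
  have hB: "h \<in> Bij (C n)" using h subgroup.subset[OF K] by auto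
  have 1: "Lt n x \<otimes>\<^bsub>SymQ n\<^esub> m \<in> MK n K"
  proof -
    have "Lt n x \<otimes>\<^bsub>SymQ n\<^esub> m = Lt n (cd_mult x a) \<otimes>\<^bsub>SymQ n\<^esub> (Lmap n a x \<otimes>\<^bsub>SymQ n\<^esub> h)"
      unfolding mh Lmap_def using G.idA[of "Lt n x" "Lt n a" "Lt n (cd_mult x a)" h] x a hB
      by (simp add: Lt_Bij mult_C)
    moreover have "Lmap n a x \<in> K" using LLK a x unfolding LL_def by blast
    ultimately show ?thesis using MK_I[OF mult_C[OF x a] subgroup.m_closed[OF K _ h]] by simp
  qed
  have 2: "inv\<^bsub>SymQ n\<^esub> (Lt n x) \<otimes>\<^bsub>SymQ n\<^esub> m \<in> MK n K"
  proof -
    obtain b where b: "b \<in> C n" and xb: "cd_mult x b = a" using left_div[OF x a] by blast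
    have "inv\<^bsub>SymQ n\<^esub> (Lt n x) \<otimes>\<^bsub>SymQ n\<^esub> m = Lt n b \<otimes>\<^bsub>SymQ n\<^esub> (inv\<^bsub>SymQ n\<^esub> (Lmap n b x) \<otimes>\<^bsub>SymQ n\<^esub> h)"
      unfolding mh Lmap_def xb using G.idB[of "Lt n a" "Lt n x" "Lt n b" h] x a b hB
      by (simp add: Lt_Bij)
    moreover have "Lmap n b x \<in> K" using LLK b x unfolding LL_def by blast
    ultimately show ?thesis using MK_I[OF b subgroup.m_closed[OF K subgroup.m_inv_closed[OF K] h]] by simp
  qed
  show ?thesis using 1 2 by blast
qed

lemma MK_closure_R:
  assumes K: "subgroup K (SymQ n)" and TK: "Tmap n ` C n \<subseteq> K"
    and RK: "\<And>a y. a \<in> C n \<Longrightarrow> y \<in> C n \<Longrightarrow> Rmap n a y \<in> K"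
    and x: "x \<in> C n" and m: "m \<in> MK n K"
  shows "Rt n x \<otimes>\<^bsub>SymQ n\<^esub> m \<in> MK n K \<and> inv\<^bsub>SymQ n\<^esub> (Rt n x) \<otimes>\<^bsub>SymQ n\<^esub> m \<in> MK n K"
proof -
  interpret G: group "SymQ n" by (rule group_BijGroup)
  obtain a h where mh: "m = Lt n a \<otimes>\<^bsub>SymQ n\<^esub> h" and a: "a \<in> C n" and h: "h \<in> K"
    using m by (auto simp: MK_def)
  have hB: "h \<in> Bij (C n)" using h subgroup.subset[OF K] by auto
  have Ta: "Tmap n a \<in> K" using TK a by blast
  have 1: "Rt n x \<otimes>\<^bsub>SymQ n\<^esub> m \<in> MK n K"
  proof -
    have "Rt n x \<otimes>\<^bsub>SymQ n\<^esub> m = Lt n (cd_mult a x) \<otimes>\<^bsub>SymQ n\<^esub>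
        (Tmap n (cd_mult a x) \<otimes>\<^bsub>SymQ n\<^esub> Rmap n a x \<otimes>\<^bsub>SymQ n\<^esub> inv\<^bsub>SymQ n\<^esub> (Tmap n a) \<otimes>\<^bsub>SymQ n\<^esub> h)"
      unfolding mh Rmap_def Tmap_def
      using G.idC[of "Rt n x" "Lt n a" "Lt n (cd_mult a x)" "Rt n (cd_mult a x)" "Rt n a" h] x a hB
      by (simp add: Lt_Bij Rt_Bij mult_C)
    moreover have "Tmap n (cd_mult a x) \<in> K" using TK a x mult_C by blast
    moreover have "Rmap n a x \<in> K" using RK a x by blast
    ultimately show ?thesis
      using MK_I[OF mult_C[OF a x] subgroup.m_closed[OF K subgroup.m_closed[OF K subgroup.m_closed[OF K]
          subgroup.m_inv_closed[OF K Ta]] h]] by simp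
  qed
  have 2: "inv\<^bsub>SymQ n\<^esub> (Rt n x) \<otimes>\<^bsub>SymQ n\<^esub> m \<in> MK n K"
  proof -
    obtain b where b: "b \<in> C n" and bx: "cd_mult b x = a" using right_div[OF x a] by blast
    have "inv\<^bsub>SymQ n\<^esub> (Rt n x) \<otimes>\<^bsub>SymQ n\<^esub> m = Lt n b \<otimes>\<^bsub>SymQ n\<^esub>
        (Tmap n b \<otimes>\<^bsub>SymQ n\<^esub> inv\<^bsub>SymQ n\<^esub> (Rmap n b x) \<otimes>\<^bsub>SymQ n\<^esub> inv\<^bsub>SymQ n\<^esub> (Tmap n a) \<otimes>\<^bsub>SymQ n\<^esub> h)"
      unfolding mh Rmap_def Tmap_def bx
      using G.idD[of "Rt n x" "Lt n a" "Lt n b" "Rt n b" "Rt n a" h] x a b hB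
      by (simp add: Lt_Bij Rt_Bij)
    moreover have "Tmap n b \<in> K" using TK b by blast
    moreover have "Rmap n b x \<in> K" using RK b x by blast
    ultimately show ?thesis
      using MK_I[OF b subgroup.m_closed[OF K subgroup.m_closed[OF K subgroup.m_closed[OF K _
          subgroup.m_inv_closed[OF K]] subgroup.m_inv_closed[OF K Ta]] h]] by simp
  qed
  show ?thesis using 1 2 by blast
qed

lemma gen_MK:
  assumes cl: "\<And>g m. g \<in> S \<Longrightarrow> m \<in> MK n K \<Longrightarrow>
       g \<otimes>\<^bsub>SymQ n\<^esub> m \<in> MK n K \<and> inv\<^bsub>SymQ n\<^esub> g \<otimes>\<^bsub>SymQ n\<^esub> m \<in> MK n K"
    and S: "S \<subseteq> Bij (C n)" and KB: "K \<subseteq> Bij (C n)"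
    and f: "f \<in> generate (SymQ n) S"
  shows "\<forall>m \<in> MK n K. f \<otimes>\<^bsub>SymQ n\<^esub> m \<in> MK n K"
  using f
proof induction
  interpret G: group "SymQ n" by (rule group_BijGroup)
  case one
  show ?case using MK_Bij[OF KB] by (auto simp: G.l_one[simplified])
next
  case (incl h) then show ?case using cl by blast
next
  case (inv h) then show ?case using cl by blast
next
  interpret G: group "SymQ n" by (rule group_BijGroup)
  case (eng h1 h2)
  have h: "h1 \<in> Bij (C n)" "h2 \<in> Bij (C n)"
    using eng G.generate_in_carrier S by (metis carrier_G)+
  show ?case
  proof
    fix m assume m: "m \<in> MK n K"
    then have mB: "m \<in> Bij (C n)" using MK_Bij[OF KB] by blast
    have "h1 \<otimes>\<^bsub>SymQ n\<^esub> h2 \<otimes>\<^bsub>SymQ n\<^esub> m = h1 \<otimes>\<^bsub>SymQ n\<^esub> (h2 \<otimes>\<^bsub>SymQ n\<^esub> m)"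
      using h mB by (simp add: G.m_assoc)
    then show "h1 \<otimes>\<^bsub>SymQ n\<^esub> h2 \<otimes>\<^bsub>SymQ n\<^esub> m \<in> MK n K" using eng m by simp
  qed
qed

lemma gen_in_MK:
  assumes cl: "\<And>g m. g \<in> S \<Longrightarrow> m \<in> MK n K \<Longrightarrow>
       g \<otimes>\<^bsub>SymQ n\<^esub> m \<in> MK n K \<and> inv\<^bsub>SymQ n\<^esub> g \<otimes>\<^bsub>SymQ n\<^esub> m \<in> MK n K"
    and S: "S \<subseteq> Bij (C n)" and KB: "K \<subseteq> Bij (C n)" and K1: "\<one>\<^bsub>SymQ n\<^esub> \<in> K"
    and f: "f \<in> generate (SymQ n) S"
  shows "f \<in> MK n K"
proof -
  interpret G: group "SymQ n" by (rule group_BijGroup)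
  have fB: "f \<in> Bij (C n)" using G.generate_in_carrier S f by (metis carrier_G)
  have o: "\<one>\<^bsub>SymQ n\<^esub> \<in> MK n K"
    using MK_I[OF one_C[of n] K1] Lt_one[of n] G.l_one[OF G.one_closed] by simp
  have "f \<otimes>\<^bsub>SymQ n\<^esub> \<one>\<^bsub>SymQ n\<^esub> \<in> MK n K" using gen_MK[OF cl S KB f] o by blast
  then show ?thesis using fB by (simp add: G.r_one[simplified])
qed

lemma MK_fix:
  assumes KB: "K \<subseteq> Bij (C n)" and K1': "\<forall>h\<in>K. h (cd_one n) = cd_one n"
    and f: "f \<in> MK n K" and f1: "f (cd_one n) = cd_one n"
  shows "f \<in> K"
proof -
  interpret G: group "SymQ n" by (rule group_BijGroup)
  obtain a h where fh: "f = Lt n a \<otimes>\<^bsub>SymQ n\<^esub> h" and a: "a \<in> C n" and h: "h \<in> K"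
    using f by (auto simp: MK_def)
  have hB: "h \<in> Bij (C n)" using h KB by auto
  have K1: "h (cd_one n) = cd_one n" using K1' h by blast
  have "f (cd_one n) = Lt n a (h (cd_one n))" using fh hB a by (simp add: mult_apply Lt_Bij one_C)
  also have "\<dots> = a" using K1 a by (simp add: Lt_at_one)
  finally have "a = cd_one n" using f1 by simp
  then show ?thesis using fh hB h by (simp add: Lt_one G.l_one[simplified])
qed

lemma fix_gen:
  assumes S: "S \<subseteq> Bij (C n)" and S1: "\<And>g. g \<in> S \<Longrightarrow> g (cd_one n) = cd_one n"
    and f: "f \<in> generate (SymQ n) S"
  shows "f (cd_one n) = cd_one n"
  using f
proof induction
  case one then show ?case by (simp add: one_apply one_C)
next
  case (incl h) then show ?case using S1 by blast
next
  case (inv h)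
  have "(inv\<^bsub>SymQ n\<^esub> h) (h (cd_one n)) = cd_one n" using inv S inv_apply1 one_C by blast
  then show ?case using S1[OF inv] by simp
next
  interpret G: group "SymQ n" by (rule group_BijGroup)
  case (eng h1 h2)
  have h: "h1 \<in> Bij (C n)" "h2 \<in> Bij (C n)"
    using eng G.generate_in_carrier S by (metis carrier_G)+
  then show ?case using eng by (simp add: mult_apply one_C)
qed


lemma LL_Bij: "LL n \<subseteq> Bij (C n)" unfolding LL_def using Lmap_Bij by blast
lemma LL_fix: "h \<in> LL n \<Longrightarrow> h (cd_one n) = cd_one n" unfolding LL_def using Lmap_fix by blast

lemma Inn_l_sub: "Inn_l n \<subseteq> generate (SymQ n) (LL n)"
proof
  interpret G: group "SymQ n" by (rule group_BijGroup)
  let ?K = "generate (SymQ n) (LL n)"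
  have K: "subgroup ?K (SymQ n)" using G.generate_is_subgroup LL_Bij by (metis carrier_G)
  have KB: "?K \<subseteq> Bij (C n)" using subgroup.subset[OF K] by simp
  have K1: "h (cd_one n) = cd_one n" if hK: "h \<in> ?K" for h
  proof (rule fix_gen[where n=n, OF LL_Bij])
    fix g assume "g \<in> LL n" then show "g (cd_one n) = cd_one n" by (rule LL_fix)
  next
    show "h \<in> generate (SymQ n) (LL n)" by (rule hK)
  qed
  have LLK: "LL n \<subseteq> ?K" by (rule subsetI, rule generate.incl)
  fix f assume "f \<in> Inn_l n"
  then have f: "f \<in> Mlt_l n" "f (cd_one n) = cd_one n" by (auto simp: Inn_l_def stab1_def)
  have fM: "f \<in> MK n ?K"
  proof (rule gen_in_MK[OF _ _ KB])
    show "\<one>\<^bsub>SymQ n\<^esub> \<in> ?K" by (rule generate.one)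
    show "Lt n ` C n \<subseteq> Bij (C n)" using Lt_Bij by blast
    show "f \<in> generate (SymQ n) (Lt n ` C n)" using f Mlt_l_def by simp
    fix g m assume g: "g \<in> Lt n ` C n" and m: "m \<in> MK n ?K"
    then obtain x where x: "x \<in> C n" "g = Lt n x" by blast
    show "g \<otimes>\<^bsub>SymQ n\<^esub> m \<in> MK n ?K \<and> inv\<^bsub>SymQ n\<^esub> g \<otimes>\<^bsub>SymQ n\<^esub> m \<in> MK n ?K"
      unfolding x(2) by (rule MK_closure_L[OF K LLK x(1) m])
  qed
  show "f \<in> ?K" using K1 by (intro MK_fix[OF KB _ fM f(2)]) blast
qed

lemma Rmap_Mlt_r: assumes "x \<in> C n" "y \<in> C n" shows "Rmap n x y \<in> Mlt_r n"
  unfolding Rmap_def Mlt_r_def using assms mult_C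
  by (intro generate.eng generate.inv generate.incl) auto

lemma S_fix: "g \<in> (Tmap n ` cd_carrier n) \<union> LL n \<Longrightarrow> g (cd_one n) = cd_one n"
proof (erule UnE)
  assume "g \<in> Tmap n ` cd_carrier n"
  then obtain x where "x \<in> C n" "g = Tmap n x" by blast
  then show ?thesis using Tmap_fix by simp
next
  assume "g \<in> LL n" then show ?thesis by (rule LL_fix)
qed

lemma S_Bij: "(Tmap n ` cd_carrier n) \<union> LL n \<subseteq> Bij (C n)"
  using LL_Bij Tmap_Bij by blast

lemma gen_S_fix: "h \<in> generate (SymQ n) ((Tmap n ` cd_carrier n) \<union> LL n) \<Longrightarrow> h (cd_one n) = cd_one n"
proof (rule fix_gen[where n=n, OF S_Bij])
  fix g assume "g \<in> (Tmap n ` cd_carrier n) \<union> LL n" then show "g (cd_one n) = cd_one n" by (rule S_fix)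
next
  assume "h \<in> generate (SymQ n) ((Tmap n ` cd_carrier n) \<union> LL n)"
  then show "h \<in> generate (SymQ n) ((Tmap n ` cd_carrier n) \<union> LL n)" .
qed

lemma Inn_sub:
  "Inn n \<subseteq> generate (SymQ n) ((Tmap n ` cd_carrier n) \<union> LL n)"
proof
  interpret G: group "SymQ n" by (rule group_BijGroup)
  let ?K = "generate (SymQ n) ((Tmap n ` cd_carrier n) \<union> LL n)"
  have SC: "(Tmap n ` cd_carrier n) \<union> LL n \<subseteq> carrier (SymQ n)" using S_Bij by simp
  have K: "subgroup ?K (SymQ n)" by (rule G.generate_is_subgroup[OF SC])
  have KB: "?K \<subseteq> Bij (C n)" using subgroup.subset[OF K] by simp
  have LLK: "LL n \<subseteq> ?K" by (rule subsetI, rule generate.incl, rule UnI2)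
  have TK: "Tmap n ` C n \<subseteq> ?K" by (rule subsetI, rule generate.incl, rule UnI1)
  have RK: "Rmap n a y \<in> ?K" if "a \<in> C n" "y \<in> C n" for a y
  proof -
    have "Rmap n a y \<in> Inn_r n" using Rmap_Mlt_r Rmap_fix that by (simp add: Inn_r_def stab1_def)
    then have "Rmap n a y \<in> Inn_l n" by (simp only: Inn_lr)
    then have "Rmap n a y \<in> generate (SymQ n) (LL n)" using Inn_l_sub by (rule subsetD[rotated])
    moreover have "generate (SymQ n) (LL n) \<subseteq> ?K"
      by (rule G.mono_generate) (rule Un_upper2)
    ultimately show ?thesis by (rule subsetD[rotated])
  qed
  fix f assume "f \<in> Inn n"
  then have f: "f \<in> Mlt n" "f (cd_one n) = cd_one n" by (auto simp: Inn_def stab1_def)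
  have fM: "f \<in> MK n ?K"
  proof (rule gen_in_MK[OF _ _ KB])
    show "\<one>\<^bsub>SymQ n\<^esub> \<in> ?K" by (rule generate.one)
    show "Lt n ` C n \<union> Rt n ` C n \<subseteq> Bij (C n)" using Lt_Bij Rt_Bij by blast
    show "f \<in> generate (SymQ n) (Lt n ` C n \<union> Rt n ` C n)" using f Mlt_def by simp
    fix g m assume g: "g \<in> Lt n ` C n \<union> Rt n ` C n" and m: "m \<in> MK n ?K"
    show "g \<otimes>\<^bsub>SymQ n\<^esub> m \<in> MK n ?K \<and> inv\<^bsub>SymQ n\<^esub> g \<otimes>\<^bsub>SymQ n\<^esub> m \<in> MK n ?K"
      using g
    proof (rule UnE)
      assume "g \<in> Lt n ` C n"
      then obtain x where x: "x \<in> C n" "g = Lt n x" by blast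
      show ?thesis unfolding x(2) by (rule MK_closure_L[OF K LLK x(1) m])
    next
      assume "g \<in> Rt n ` C n"
      then obtain x where x: "x \<in> C n" "g = Rt n x" by blast
      show ?thesis unfolding x(2) by (rule MK_closure_R[OF K TK RK x(1) m])
    qed
  qed
  have K1: "\<forall>h\<in>?K. h (cd_one n) = cd_one n" using gen_S_fix by blast
  show "f \<in> ?K" by (rule MK_fix[OF KB K1 fM f(2)])
qed

lemma Inn_sup:
  "generate (SymQ n) ((Tmap n ` cd_carrier n) \<union> LL n) \<subseteq> Inn n"
proof
  interpret G: group "SymQ n" by (rule group_BijGroup)
  have MB: "Lt n ` C n \<union> Rt n ` C n \<subseteq> carrier (SymQ n)" using Lt_Bij Rt_Bij by auto
  have sub: "(Tmap n ` cd_carrier n) \<union> LL n \<subseteq> Mlt n"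
  proof
    fix g assume "g \<in> (Tmap n ` cd_carrier n) \<union> LL n"
    then show "g \<in> Mlt n"
    proof
      assume "g \<in> Tmap n ` cd_carrier n"
      then obtain x where x: "x \<in> C n" "g = Tmap n x" by blast
      show ?thesis unfolding x Tmap_def Mlt_def using x
        by (intro generate.eng generate.inv generate.incl) auto
    next
      assume "g \<in> LL n"
      then obtain x y where x: "x \<in> C n" "y \<in> C n" "g = Lmap n x y" unfolding LL_def by blast
      show ?thesis unfolding x Lmap_def Mlt_def using x mult_C
        by (intro generate.eng generate.inv generate.incl) auto
    qed
  qed
  have Msub: "subgroup (Mlt n) (SymQ n)" unfolding Mlt_def by (rule G.generate_is_subgroup[OF MB])
  fix f assume f: "f \<in> generate (SymQ n) ((Tmap n ` cd_carrier n) \<union> LL n)"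
  have "f \<in> Mlt n" using G.generate_subgroup_incl[OF sub Msub] f by (rule subsetD)
  moreover have "f (cd_one n) = cd_one n" using f by (rule gen_S_fix)
  ultimately show "f \<in> Inn n" by (simp add: Inn_def stab1_def)
qed

theorem mainTheorem12:
  fixes n :: nat
  shows "Inn_l n = Inn_r n \<and>
    Inn n = generate (SymQ n)
      ((Tmap n ` cd_carrier n) \<union> {Lmap n x y | x y. x \<in> cd_carrier n \<and> y \<in> cd_carrier n})"
proof
  show "Inn_l n = Inn_r n" by (rule Inn_lr)
  have "Inn n = generate (SymQ n) ((Tmap n ` cd_carrier n) \<union> LL n)"
    by (rule equalityI[OF Inn_sub Inn_sup])
  then show "Inn n = generate (SymQ n)
      ((Tmap n ` cd_carrier n) \<union> {Lmap n x y | x y. x \<in> cd_carrier n \<and> y \<in> cd_carrier n})"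
    by (simp only: LL_def)
qed

end
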